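(* Let $G$ be the three-player game with $A_i=\{a_{i1},a_{i2},a_{i3}\}$ for $i=1,2,3$ and fitness vectors $\pi(a_{1r},a_{2c},a_{3k})$ given as follows (listed for row $r$ of player 1, column $c$ of player 2). For $a_{31}$: $r=1$: $(7,7,7),(3,0,3),(3,0,3)$; $r=2$: $(0,3,3),(7,7,0),(1,1,1)$; $r=3$: $(0,3,3),(1,1,1),(1,1,1)$. For $a_{32}$: $r=1$: $(3,3,0),(1,1,1),(1,1,1)$; $r=2$: $(1,1,1),(7,7,0),(1,1,1)$; $r=3$: $(7,0,7),(7,0,7),(7,0,7)$. For $a_{33}$: $r=1$: $(3,3,0),(1,1,1),(0,7,7)$; $r=2$: $(1,1,1),(7,7,0),(0,7,7)$; $r=3$: $(1,1,1),(1,1,1),(0,7,7)$. Then the strict Nash equilibrium $(a_{11},a_{21},a_{31})$ is not stable under perfect observability, and consequently no strategy profile of $G$ is stable under perfect observability.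
   Context: Preference types: $\Theta=\mathbb{R}^A$, $A=A_1\times A_2\times A_3$ (utility functions on $A$, extended multilinearly to mixed profiles); $\pi_i$ likewise extended. $\mathcal{M}(\Theta^3)$ is the set of product distributions $\mu=\mu_1\times\mu_2\times\mu_3$ with finitely supported marginals; $\operatorname{supp}\mu=\prod_i\operatorname{supp}\mu_i$, $\mu(\theta)=\prod_i\mu_i(\theta_i)$, $\mu_{-i}(\theta_{-i})=\prod_{j\ne i}\mu_j(\theta_j)$. Mutants: for nonempty $J\subseteq N=\{1,2,3\}$, a mutant sub-profile is $\tilde\theta_J\in\prod_{j\in J}(\Theta\setminus\operatorname{supp}\mu_j)$ with shares $\varepsilon\in(0,1)^{|J|}$, $\|\varepsilon\|=\max_j\varepsilon_j$; post-entry $\tilde\mu^\varepsilon_i=(1-\varepsilon_i)\mu_i+\varepsilon_i\delta_{\tilde\theta_i}$ for $i\in J$, $\tilde\mu^\varepsilon_i=\mu_i$ otherwise. Perfect observability: an equilibrium is a map $b:\operatorname{supp}\mu\to\prod_i\Delta(A_i)$ such that each $b(\theta)$ is a Nash equilibrium of the game with payoffs $\theta_1,\theta_2,\theta_3$; $B_1(\mu)$ is the set of these; $(\mu,b)$ is a configuration, with aggregate outcome $\varphi_{\mu,b}(a)=\sum_{\theta}\mu(\theta)\prod_i b_i(\theta)(a_i)$. Average fitness $\Pi_{\theta_i}(\mu;b)=\sum_{\theta'_{-i}}\mu_{-i}(\theta'_{-i})\pi_i(b(\theta_i,\theta'_{-i}))$. Balanced: equal average fitness of all types within each population. Focal set $B_1(\tilde\mu^\varepsilon;b)=\{\tilde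 b\in B_1(\tilde\mu^\varepsilon):\tilde b=b\text{ on }\operatorname{supp}\mu\}$. $(\mu,b)$ is stable if balanced and for every nonempty $J$ and every $\tilde\theta_J$ there is $\bar\epsilon\in(0,1)$ such that for all $\varepsilon$ with $\|\varepsilon\|<\bar\epsilon$ and all $\tilde b$ in the focal set, either (i) some $j\in J$ has $\Pi_{\theta_j}(\tilde\mu^\varepsilon;\tilde b)>\Pi_{\tilde\theta_j}(\tilde\mu^\varepsilon;\tilde b)$ for all $\theta_j\in\operatorname{supp}\mu_j$, or (ii) for every $i$ all types in $\operatorname{supp}\tilde\mu^\varepsilon_i$ have equal average fitness. A profile $\sigma\in\prod_i\Delta(A_i)$ is stable if $\varphi_\sigma(a)=\prod_i\sigma_i(a_i)$ is the aggregate outcome of a stable configuration. *)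

theory Defs
  imports Complex_Main
begin

datatype player = P1 | P2 | P3

lemma UNIV_player: "(UNIV :: player set) = {P1, P2, P3}"
  using player.exhaust by auto

instance player :: finite
  by standard (simp add: UNIV_player)

text \<open>Each player's action set A_i = {a_i1, a_i2, a_i3}.\<close>
datatype act = Act1 | Act2 | Act3

lemma UNIV_act: "(UNIV :: act set) = {Act1, Act2, Act3}"
  using act.exhaust by auto

instance act :: finite
  by standard (simp add: UNIV_act)

type_synonym aprofile = "player \<Rightarrow> act"

type_synonym ptype = "aprofile \<Rightarrow> real"

type_synonym mixed = "act \<Rightarrow> real"
type_synonym mprofile = "player \<Rightarrow> mixed"

definition mixed :: "mixed \<Rightarrow> bool" where
  "mixed s \<longleftrightarrow> (\<forall>a. 0 \<le> s a) \<and> sum s UNIV = 1"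

definition mixedprof :: "mprofile \<Rightarrow> bool" where
  "mixedprof \<sigma> \<longleftrightarrow> (\<forall>i. mixed (\<sigma> i))"

definition EU :: "ptype \<Rightarrow> mprofile \<Rightarrow> real" where
  "EU u \<sigma> = (\<Sum>a\<in>UNIV. (\<Prod>i\<in>UNIV. \<sigma> i (a i)) * u a)"

definition is_NE :: "(player \<Rightarrow> ptype) \<Rightarrow> mprofile \<Rightarrow> bool" where
  "is_NE th \<sigma> \<longleftrightarrow> mixedprof \<sigma> \<and>
     (\<forall>i s. mixed s \<longrightarrow> EU (th i) (\<sigma>(i := s)) \<le> EU (th i) \<sigma>)"

definition supp :: "(ptype \<Rightarrow> real) \<Rightarrow> ptype set" where
  "supp m = {t. m t \<noteq> 0}"

definition is_dist :: "(ptype \<Rightarrow> real) \<Rightarrow> bool" where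
  "is_dist m \<longleftrightarrow> finite (supp m) \<and> (\<forall>t. 0 \<le> m t) \<and> (\<Sum>t\<in>supp m. m t) = 1"

text \<open>Product distributions mu = mu_1 x mu_2 x mu_3, given by their marginals.\<close>
type_synonym pstate = "player \<Rightarrow> ptype \<Rightarrow> real"

definition popstate :: "pstate \<Rightarrow> bool" where
  "popstate mu \<longleftrightarrow> (\<forall>i. is_dist (mu i))"

definition suppP :: "pstate \<Rightarrow> (player \<Rightarrow> ptype) set" where
  "suppP mu = {th. \<forall>i. th i \<in> supp (mu i)}"

type_synonym eqmap = "(player \<Rightarrow> ptype) \<Rightarrow> mprofile"

definition B1 :: "pstate \<Rightarrow> eqmap set" where
  "B1 mu = {b. \<forall>th\<in>suppP mu. is_NE th (b th)}"

definition avg_fit :: "(player \<Rightarrow> ptype) \<Rightarrow> pstate \<Rightarrow> eqmap \<Rightarrow> player \<Rightarrow> ptype \<Rightarrow> real" where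
  "avg_fit \<pi> mu b i t =
     (\<Sum>th\<in>{th. th i = t \<and> (\<forall>j. j \<noteq> i \<longrightarrow> th j \<in> supp (mu j))}.
        (\<Prod>j\<in>UNIV - {i}. mu j (th j)) * EU (\<pi> i) (b th))"

definition balanced :: "(player \<Rightarrow> ptype) \<Rightarrow> pstate \<Rightarrow> eqmap \<Rightarrow> bool" where
  "balanced \<pi> mu b \<longleftrightarrow>
     (\<forall>i. \<forall>t\<in>supp (mu i). \<forall>t'\<in>supp (mu i). avg_fit \<pi> mu b i t = avg_fit \<pi> mu b i t')"

definition post_entry :: "pstate \<Rightarrow> player set \<Rightarrow> (player \<Rightarrow> ptype) \<Rightarrow> (player \<Rightarrow> real) \<Rightarrow> pstate" where
  "post_entry mu J th' eps i =
     (if i \<in> J then (\<lambda>t. (1 - eps i) * mu i t + eps i * (if t = th' i then 1 else 0)) else mu i)"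

definition stable_config :: "(player \<Rightarrow> ptype) \<Rightarrow> pstate \<Rightarrow> eqmap \<Rightarrow> bool" where
  "stable_config \<pi> mu b \<longleftrightarrow>
     popstate mu \<and> b \<in> B1 mu \<and> balanced \<pi> mu b \<and>
     (\<forall>J th'. J \<noteq> {} \<and> (\<forall>j\<in>J. th' j \<notin> supp (mu j)) \<longrightarrow>
        (\<exists>ebar. 0 < ebar \<and> ebar < 1 \<and>
           (\<forall>eps. (\<forall>j\<in>J. 0 < eps j \<and> eps j < 1) \<and> (\<forall>j\<in>J. eps j < ebar) \<longrightarrow>
              (\<forall>b'\<in>B1 (post_entry mu J th' eps).
                 (\<forall>th\<in>suppP mu. b' th = b th) \<longrightarrow>
                 ((\<exists>j\<in>J. \<forall>t\<in>supp (mu j).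
                     avg_fit \<pi> (post_entry mu J th' eps) b' j t >
                     avg_fit \<pi> (post_entry mu J th' eps) b' j (th' j))
                  \<or> balanced \<pi> (post_entry mu J th' eps) b')))))"

definition outcome :: "pstate \<Rightarrow> eqmap \<Rightarrow> aprofile \<Rightarrow> real" where
  "outcome mu b a = (\<Sum>th\<in>suppP mu. (\<Prod>i\<in>UNIV. mu i (th i)) * (\<Prod>i\<in>UNIV. b th i (a i)))"

definition stable_profile :: "(player \<Rightarrow> ptype) \<Rightarrow> mprofile \<Rightarrow> bool" where
  "stable_profile \<pi> \<sigma> \<longleftrightarrow>
     (\<exists>mu b. stable_config \<pi> mu b \<and> (\<forall>a. outcome mu b a = (\<Prod>i\<in>UNIV. \<sigma> i (a i))))"

fun aidx :: "act \<Rightarrow> nat" where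
  "aidx Act1 = 0" | "aidx Act2 = 1" | "aidx Act3 = 2"

text \<open>Table indexed by [k][r][c]: player 3 action k, row r (player 1), column c (player 2).\<close>
definition Gtab :: "(real \<times> real \<times> real) list list list" where
  "Gtab =
    [ [ [(7,7,7),(3,0,3),(3,0,3)], [(0,3,3),(7,7,0),(1,1,1)], [(0,3,3),(1,1,1),(1,1,1)] ],
      [ [(3,3,0),(1,1,1),(1,1,1)], [(1,1,1),(7,7,0),(1,1,1)], [(7,0,7),(7,0,7),(7,0,7)] ],
      [ [(3,3,0),(1,1,1),(0,7,7)], [(1,1,1),(7,7,0),(0,7,7)], [(1,1,1),(1,1,1),(0,7,7)] ] ]"

definition Gvec :: "aprofile \<Rightarrow> real \<times> real \<times> real" where
  "Gvec a = Gtab ! aidx (a P3) ! aidx (a P1) ! aidx (a P2)"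

definition G :: "player \<Rightarrow> ptype" where
  "G i a = (case i of P1 \<Rightarrow> fst (Gvec a) | P2 \<Rightarrow> fst (snd (Gvec a)) | P3 \<Rightarrow> snd (snd (Gvec a)))"

definition sigma0 :: mprofile where
  "sigma0 i a = (if a = Act1 then 1 else 0)"

end

theory Submission
  imports Defs
begin

definition trip :: "'a \<Rightarrow> 'a \<Rightarrow> 'a \<Rightarrow> player \<Rightarrow> 'a" where
  "trip x y z = (\<lambda>q. case q of P1 \<Rightarrow> x | P2 \<Rightarrow> y | P3 \<Rightarrow> z)"

lemma trip_app[simp]: "trip x y z P1 = x" "trip x y z P2 = y" "trip x y z P3 = z"
  by (simp_all add: trip_def)

lemma trip_eta: "a = trip (a P1) (a P2) (a P3)"
  by (rule ext, case_tac x) (simp_all)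

lemma trip_upd[simp]: "(trip x y z)(P1 := w) = trip w y z" "(trip x y z)(P2 := w) = trip x w z"
  "(trip x y z)(P3 := w) = trip x y w"
  by (auto simp: fun_eq_iff trip_def split: player.split)

lemma trip_inj[simp]: "(trip x y z = trip x' y' z') \<longleftrightarrow> x = x' \<and> y = y' \<and> z = z'"
  by (metis trip_app)

lemma EU_expand: "EU u \<sigma> = (\<Sum>x\<in>UNIV. \<sigma> P1 x * (\<Sum>y\<in>UNIV. \<sigma> P2 y * (\<Sum>z\<in>UNIV. \<sigma> P3 z * u (trip x y z))))"
proof -
  have pr: "(\<Prod>i\<in>UNIV. \<sigma> i (a i)) = \<sigma> P1 (a P1) * \<sigma> P2 (a P2) * \<sigma> P3 (a P3)" for a :: aprofile
    by (simp add: UNIV_player)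
  have U: "(UNIV :: aprofile set) = (\<lambda>(x,y,z). trip x y z) ` UNIV"
    by (auto simp: image_iff) (metis trip_eta)
  have inj: "inj (\<lambda>(x,y,z). trip x y z :: aprofile)"
    by (auto simp: inj_def)
  have "EU u \<sigma> = (\<Sum>a\<in>UNIV. \<sigma> P1 (a P1) * \<sigma> P2 (a P2) * \<sigma> P3 (a P3) * u a)"
    by (simp add: EU_def pr)
  also have "\<dots> = (\<Sum>(x,y,z)\<in>UNIV. \<sigma> P1 x * \<sigma> P2 y * \<sigma> P3 z * u (trip x y z))"
    by (subst U, subst sum.reindex[OF inj]) (simp add: case_prod_beta)
  also have "\<dots> = (\<Sum>x\<in>UNIV. \<Sum>(y,z)\<in>UNIV. \<sigma> P1 x * \<sigma> P2 y * \<sigma> P3 z * u (trip x y z))"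
    by (simp add: sum.cartesian_product[symmetric] UNIV_Times_UNIV[symmetric] del: UNIV_Times_UNIV)
  also have "\<dots> = (\<Sum>x\<in>UNIV. \<Sum>y\<in>UNIV. \<Sum>z\<in>UNIV. \<sigma> P1 x * \<sigma> P2 y * \<sigma> P3 z * u (trip x y z))"
    by (simp add: sum.cartesian_product[symmetric] UNIV_Times_UNIV[symmetric] del: UNIV_Times_UNIV)
  also have "\<dots> = (\<Sum>x\<in>UNIV. \<sigma> P1 x * (\<Sum>y\<in>UNIV. \<sigma> P2 y * (\<Sum>z\<in>UNIV. \<sigma> P3 z * u (trip x y z))))"
    by (simp add: sum_distrib_left mult.assoc)
  finally show ?thesis .
qed


definition pureP :: "aprofile \<Rightarrow> mprofile" where
  "pureP p = (\<lambda>i a. if a = p i then 1 else 0)"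

lemma sum_delta_act[simp]: "(\<Sum>x\<in>UNIV. (if x = (a::act) then 1 else 0) * (F x::real)) = F a"
proof -
  have "\<And>x. (if x = a then 1 else 0) * F x = (if x = a then F x else 0)" by simp
  thus ?thesis using sum.delta[OF finite_UNIV, of a F] by simp
qed

lemma mixed_pure: "mixed (\<lambda>x. if x = a then 1 else 0)"
  by (simp add: mixed_def)

lemma mixedprof_pure: "mixedprof (pureP p)"
  by (simp add: mixedprof_def pureP_def mixed_pure)

lemma EU_pure: "EU u (pureP p) = u p"
  by (simp add: EU_expand pureP_def) (metis trip_eta)

lemma upd_trip: "p(P1 := x) = trip x (p P2) (p P3)" "p(P2 := x) = trip (p P1) x (p P3)"
  "p(P3 := x) = trip (p P1) (p P2) x"
  by (auto simp: fun_eq_iff trip_def split: player.split)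

lemma EU_pure_dev: "EU u ((pureP p)(k := s)) = (\<Sum>a\<in>UNIV. s a * u (p(k := a)))"
  by (cases k) (simp_all add: EU_expand pureP_def upd_trip)

lemma mixed_le: "mixed s \<Longrightarrow> (\<And>a. f a \<le> M) \<Longrightarrow> (\<Sum>a\<in>UNIV. s a * f a) \<le> (M::real)"
proof -
  assume s: "mixed s" and f: "\<And>a. f a \<le> M"
  have "(\<Sum>a\<in>UNIV. s a * f a) \<le> (\<Sum>a\<in>UNIV. s a * M)"
    using s f by (intro sum_mono mult_left_mono) (auto simp: mixed_def)
  also have "\<dots> = M" using s by (simp add: mixed_def sum_distrib_right[symmetric])
  finally show ?thesis .
qed

lemma mixed_eq: "mixed s \<Longrightarrow> (\<Sum>a\<in>UNIV. s a * M) = (M::real)"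
  by (simp add: mixed_def sum_distrib_right[symmetric])

lemma EU_le: "mixedprof \<sigma> \<Longrightarrow> (\<And>a. u a \<le> M) \<Longrightarrow> EU u \<sigma> \<le> M"
  unfolding EU_expand mixedprof_def
  by (intro mixed_le) auto

lemma EU_const: "mixedprof \<sigma> \<Longrightarrow> EU (\<lambda>_. c) \<sigma> = c"
  unfolding EU_expand mixedprof_def by (simp add: mixed_eq)

lemma mixedprof_upd: "mixedprof \<sigma> \<Longrightarrow> mixed s \<Longrightarrow> mixedprof (\<sigma>(i := s))"
  by (simp add: mixedprof_def)

definition br :: "(act \<Rightarrow> real) \<Rightarrow> act" where
  "br h = (if h Act2 \<le> h Act1 \<and> h Act3 \<le> h Act1 then Act1 else if h Act3 \<le> h Act2 then Act2 else Act3)"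

lemma br_max: "h a \<le> h (br h)"
  by (cases a) (auto simp: br_def)

lemma NE_pure:
  assumes "\<And>i. (\<exists>c. th i = (\<lambda>_. c)) \<or> p i = br (\<lambda>a. th i (p(i := a)))"
  shows "is_NE th (pureP p)"
  unfolding is_NE_def
proof (intro conjI allI impI mixedprof_pure)
  fix i s assume s: "mixed s"
  show "EU (th i) ((pureP p)(i := s)) \<le> EU (th i) (pureP p)"
  proof (cases "\<exists>c. th i = (\<lambda>_. c)")
    case True
    then obtain c where "th i = (\<lambda>_. c)" by blast
    thus ?thesis using s by (simp add: EU_const mixedprof_upd mixedprof_pure)
  next
    case False
    hence pi: "p i = br (\<lambda>a. th i (p(i := a)))" using assms by blast
    have "EU (th i) ((pureP p)(i := s)) \<le> th i (p(i := p i))"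
      unfolding EU_pure_dev by (rule mixed_le[OF s]) (subst pi, rule br_max)
    thus ?thesis by (simp add: EU_pure)
  qed
qed

lemma NE_mut1:
  assumes "is_NE th' \<sigma>" "th i = (\<lambda>_. c)" "\<And>j. j \<noteq> i \<Longrightarrow> th j = th' j"
  shows "is_NE th \<sigma>"
  using assms unfolding is_NE_def
  by (metis EU_const mixedprof_upd order_refl)



lemma G_le7_trip: "G i (trip x y z) \<le> 7"
  by (cases i; cases x; cases y; cases z) (simp_all add: G_def Gvec_def Gtab_def)

lemma G_le7: "G i a \<le> 7"
  by (metis G_le7_trip trip_eta)

lemma G_vals:
  "G P1 (trip Act2 Act2 z) = 7" "G P2 (trip Act2 Act2 z) = 7"
  "G P1 (trip Act3 y Act2) = 7" "G P3 (trip Act3 y Act2) = 7"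
  "G P2 (trip x Act3 Act3) = 7" "G P3 (trip x Act3 Act3) = 7"
  "G P1 (trip x Act3 Act3) = 0" "G i (trip Act1 Act1 Act1) = 7"
  apply (cases z; simp add: G_def Gvec_def Gtab_def)
  apply (cases z; simp add: G_def Gvec_def Gtab_def)
  apply (cases y; simp add: G_def Gvec_def Gtab_def)
  apply (cases y; simp add: G_def Gvec_def Gtab_def)
  apply (cases x; simp add: G_def Gvec_def Gtab_def)
  apply (cases x; simp add: G_def Gvec_def Gtab_def)
  apply (cases x; simp add: G_def Gvec_def Gtab_def)
  apply (cases i; simp add: G_def Gvec_def Gtab_def)
  done


definition bdev :: "ptype \<Rightarrow> (player \<Rightarrow> ptype) \<Rightarrow> eqmap \<Rightarrow> eqmap" where
 "bdev mc t0 b th =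
   (if th P1 = mc \<and> th P2 = mc \<and> th P3 = mc then pureP (trip Act1 Act1 Act1)
    else if th P1 = mc \<and> th P2 = mc then pureP (trip Act2 Act2 (br (\<lambda>z. th P3 (trip Act2 Act2 z))))
    else if th P1 = mc \<and> th P3 = mc then pureP (trip Act3 (br (\<lambda>y. th P2 (trip Act3 y Act2))) Act2)
    else if th P2 = mc \<and> th P3 = mc then pureP (trip (br (\<lambda>x. th P1 (trip x Act3 Act3))) Act3 Act3)
    else if th P1 = mc then b (th(P1 := t0 P1))
    else if th P2 = mc then b (th(P2 := t0 P2))
    else if th P3 = mc then b (th(P3 := t0 P3))
    else b th)"

lemma post_eq: "post_entry mu UNIV (\<lambda>_. mc) (\<lambda>_. e) j t = (1 - e) * mu j t + e * (if t = mc then 1 else 0)"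
  by (simp add: post_entry_def)

lemma supp_post:
  assumes "mc \<notin> supp (mu j)" "0 < e" "e < 1"
  shows "supp (post_entry mu UNIV (\<lambda>_. mc) (\<lambda>_. e) j) = insert mc (supp (mu j))"
  using assms by (auto simp: supp_def post_eq)

lemma suppP_post:
  assumes "\<And>j. mc \<notin> supp (mu j)" "0 < e" "e < 1"
  shows "th \<in> suppP (post_entry mu UNIV (\<lambda>_. mc) (\<lambda>_. e)) \<longleftrightarrow> (\<forall>j. th j = mc \<or> th j \<in> supp (mu j))"
  using supp_post[OF assms(1) assms(2,3)] by (auto simp: suppP_def)

lemma bdev_agree:
  assumes "\<And>j. mc \<notin> supp (mu j)" "th \<in> suppP mu"
  shows "bdev mc t0 b th = b th"
proof -
  have "th j \<noteq> mc" for j using assms unfolding suppP_def by blast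
  thus ?thesis by (simp add: bdev_def)
qed

lemma bdev_mimic:
  assumes "\<And>j. mc \<notin> supp (mu j)" "th \<in> suppP mu" "th j = t0 j"
  shows "bdev mc t0 b (th(j := mc)) = b th"
proof -
  have n: "th k \<noteq> mc" for k using assms unfolding suppP_def by blast
  show ?thesis using n assms(3)
    by (cases j) (auto simp: bdev_def fun_upd_idem)
qed

lemma bdev_seven:
  assumes "th j = mc" "th k = mc" "k \<noteq> j"
  shows "EU (G j) (bdev mc t0 b th) = 7"
  using assms
  by (cases j; cases k; cases "th P1 = mc"; cases "th P2 = mc"; cases "th P3 = mc")
     (simp_all add: bdev_def EU_pure G_vals)

lemma bdev_B1:
  assumes nm: "\<And>j. mc \<notin> supp (mu j)" and e: "0 < e" "e < 1" and b: "b \<in> B1 mu"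
    and t0: "\<And>j. t0 j \<in> supp (mu j)" and mc: "mc = (\<lambda>_. c)"
  shows "bdev mc t0 b \<in> B1 (post_entry mu UNIV (\<lambda>_. mc) (\<lambda>_. e))"
  unfolding B1_def
proof (intro CollectI ballI)
  fix th assume "th \<in> suppP (post_entry mu UNIV (\<lambda>_. mc) (\<lambda>_. e))"
  hence th: "\<And>j. th j = mc \<or> th j \<in> supp (mu j)" using suppP_post[of mc mu e th] nm e by blast
  have bNE: "\<And>th. th \<in> suppP mu \<Longrightarrow> is_NE th (b th)" using b by (simp add: B1_def)
  have inS: "\<And>th'. (\<And>j. th' j \<in> supp (mu j)) \<Longrightarrow> th' \<in> suppP mu" by (simp add: suppP_def)
  have ne: "\<And>j. th j \<noteq> mc \<Longrightarrow> th j \<in> supp (mu j)" using th by blast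
  have one: "is_NE th (b (th(i := t0 i)))" if "th i = mc" "\<And>j. j \<noteq> i \<Longrightarrow> th j \<noteq> mc" for i
  proof (rule NE_mut1[of "th(i := t0 i)" _ _ i c])
    show "is_NE (th(i := t0 i)) (b (th(i := t0 i)))"
      by (rule bNE, rule inS) (auto simp: t0 ne that)
    show "th i = (\<lambda>_. c)" using that mc by simp
  qed simp
  show "is_NE th (bdev mc t0 b th)"
  proof (cases "th P1 = mc"; cases "th P2 = mc"; cases "th P3 = mc")
    assume a: "th P1 = mc" "th P2 = mc" "th P3 = mc"
    show ?thesis unfolding bdev_def using a mc
      apply simp
      apply (intro NE_pure)
      subgoal for i by (cases i) auto
      done
  next
    assume a: "th P1 = mc" "th P2 = mc" "th P3 \<noteq> mc"
    show ?thesis unfolding bdev_def using a mc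
      apply simp
      apply (intro NE_pure)
      subgoal for i by (cases i) auto
      done
  next
    assume a: "th P1 = mc" "th P2 \<noteq> mc" "th P3 = mc"
    show ?thesis unfolding bdev_def using a mc
      apply simp
      apply (intro NE_pure)
      subgoal for i by (cases i) auto
      done
  next
    assume a: "th P1 \<noteq> mc" "th P2 = mc" "th P3 = mc"
    show ?thesis unfolding bdev_def using a mc
      apply simp
      apply (intro NE_pure)
      subgoal for i by (cases i) auto
      done
  next
    assume a: "th P1 = mc" "th P2 \<noteq> mc" "th P3 \<noteq> mc"
    have "is_NE th (b (th(P1 := t0 P1)))"
      apply (rule one)
      using a apply simp
      subgoal for j by (cases j) (use a in auto)
      done
    thus ?thesis using a by (simp add: bdev_def)
  next
    assume a: "th P1 \<noteq> mc" "th P2 = mc" "th P3 \<noteq> mc"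
    have "is_NE th (b (th(P2 := t0 P2)))"
      apply (rule one)
      using a apply simp
      subgoal for j by (cases j) (use a in auto)
      done
    thus ?thesis using a by (simp add: bdev_def)
  next
    assume a: "th P1 \<noteq> mc" "th P2 \<noteq> mc" "th P3 = mc"
    have "is_NE th (b (th(P3 := t0 P3)))"
      apply (rule one)
      using a apply simp
      subgoal for j by (cases j) (use a in auto)
      done
    thus ?thesis using a by (simp add: bdev_def)
  next
    assume a: "th P1 \<noteq> mc" "th P2 \<noteq> mc" "th P3 \<noteq> mc"
    have "th j \<in> supp (mu j)" for j using a ne by (cases j) auto
    hence "th \<in> suppP mu" by (rule inS)
    thus ?thesis using a bNE by (simp add: bdev_def)
  qed
qed


lemma avg_diff:
  "avg_fit \<pi> M b i t1 - avg_fit \<pi> M b i t0 =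
   (\<Sum>th\<in>{th. th i = t0 \<and> (\<forall>j. j \<noteq> i \<longrightarrow> th j \<in> supp (M j))}.
      (\<Prod>j\<in>UNIV - {i}. M j (th j)) * (EU (\<pi> i) (b (th(i := t1))) - EU (\<pi> i) (b th)))"
proof -
  let ?S = "{th. th i = t0 \<and> (\<forall>j. j \<noteq> i \<longrightarrow> th j \<in> supp (M j))}"
  have w: "(\<Prod>j\<in>UNIV - {i}. M j ((th(i := t1)) j)) = (\<Prod>j\<in>UNIV - {i}. M j (th j))" for th
    by (rule prod.cong) auto
  have "avg_fit \<pi> M b i t1 = (\<Sum>th\<in>?S. (\<Prod>j\<in>UNIV - {i}. M j (th j)) * EU (\<pi> i) (b (th(i := t1))))"
    unfolding avg_fit_def
    by (rule sum.reindex_bij_witness[symmetric, of _ "\<lambda>th. th(i := t0)" "\<lambda>th. th(i := t1)"])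
       (auto simp: w)
  thus ?thesis
    by (simp add: avg_fit_def right_diff_distrib sum_subtractf)
qed

lemma not_stable: "\<not> stable_config G mu b"
proof
  assume st: "stable_config G mu b"
  have pop: "popstate mu" and bB: "b \<in> B1 mu" using st by (auto simp: stable_config_def)
  have dist: "is_dist (mu j)" for j using pop by (simp add: popstate_def)
  have fin: "finite (supp (mu j))" for j using dist by (simp add: is_dist_def)
  have nn: "0 \<le> mu j t" for j t using dist by (simp add: is_dist_def)
  have "supp (mu j) \<noteq> {}" for j using dist[of j] unfolding is_dist_def by (metis sum.empty zero_neq_one)
  hence ex: "\<exists>t. t \<in> supp (mu j)" for j by blast
  define t0 where "t0 j = (SOME t. t \<in> supp (mu j))" for j
  have t0: "t0 j \<in> supp (mu j)" for j unfolding t0_def by (rule someI_ex[OF ex])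
  let ?F = "(\<lambda>f. f (\<lambda>_. Act1)) ` (supp (mu P1) \<union> supp (mu P2) \<union> supp (mu P3))"
  have "finite ?F" using fin by simp
  then obtain c :: real where c: "c \<notin> ?F" using ex_new_if_finite[OF infinite_UNIV_char_0] by blast
  define mc :: ptype where "mc = (\<lambda>_. c)"
  have nm: "mc \<notin> supp (mu j)" for j
  proof
    assume "mc \<in> supp (mu j)"
    hence "mc \<in> supp (mu P1) \<union> supp (mu P2) \<union> supp (mu P3)" by (cases j) auto
    hence "mc (\<lambda>_. Act1) \<in> ?F" by (rule imageI)
    thus False using c by (simp add: mc_def)
  qed
  note cl = st[unfolded stable_config_def, THEN conjunct2, THEN conjunct2, THEN conjunct2]
  have "\<exists>ebar. 0 < ebar \<and> ebar < 1 \<and>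
           (\<forall>eps. (\<forall>j\<in>UNIV. 0 < eps j \<and> eps j < 1) \<and> (\<forall>j\<in>UNIV. eps j < ebar) \<longrightarrow>
              (\<forall>b'\<in>B1 (post_entry mu UNIV (\<lambda>_. mc) eps).
                 (\<forall>th\<in>suppP mu. b' th = b th) \<longrightarrow>
                 ((\<exists>j\<in>UNIV. \<forall>t\<in>supp (mu j).
                     avg_fit G (post_entry mu UNIV (\<lambda>_. mc) eps) b' j t >
                     avg_fit G (post_entry mu UNIV (\<lambda>_. mc) eps) b' j ((\<lambda>_. mc) j))
                  \<or> balanced G (post_entry mu UNIV (\<lambda>_. mc) eps) b')))"
    by (rule cl[rule_format]) (simp add: nm)
  then obtain ebar where eb: "0 < ebar" "ebar < 1" and
    H: "\<And>eps. (\<forall>j\<in>UNIV. 0 < eps j \<and> eps j < 1) \<and> (\<forall>j\<in>UNIV. eps j < ebar) \<Longrightarrow>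
              (\<forall>b'\<in>B1 (post_entry mu UNIV (\<lambda>_. mc) eps).
                 (\<forall>th\<in>suppP mu. b' th = b th) \<longrightarrow>
                 ((\<exists>j\<in>UNIV. \<forall>t\<in>supp (mu j).
                     avg_fit G (post_entry mu UNIV (\<lambda>_. mc) eps) b' j t >
                     avg_fit G (post_entry mu UNIV (\<lambda>_. mc) eps) b' j ((\<lambda>_. mc) j))
                  \<or> balanced G (post_entry mu UNIV (\<lambda>_. mc) eps) b'))"
    by blast
  define e where "e = ebar / 2"
  have e: "0 < e" "e < 1" "e < ebar" using eb by (auto simp: e_def)
  define post where "post = post_entry mu UNIV (\<lambda>_. mc) (\<lambda>_. e)"
  define b' where "b' = bdev mc t0 b"
  have b'B: "b' \<in> B1 post" unfolding b'_def post_def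
    by (rule bdev_B1[OF nm e(1,2) bB t0 mc_def])
  have b'agree: "\<forall>th\<in>suppP mu. b' th = b th" unfolding b'_def using bdev_agree nm by blast
  have disj: "(\<exists>j\<in>UNIV. \<forall>t\<in>supp (mu j). avg_fit G post b' j t > avg_fit G post b' j mc)
              \<or> balanced G post b'"
    using H[of "\<lambda>_. e"] e b'B b'agree unfolding post_def by auto
  have spost: "supp (post j) = insert mc (supp (mu j))" for j
    unfolding post_def by (rule supp_post[OF nm e(1,2)])
  have pnn: "0 \<le> post j t" for j t using e nn[of j t] by (simp add: post_def post_eq)
  have pmc: "post j mc = e" for j using nm[of j] by (simp add: post_def post_eq supp_def)
  have NEb': "is_NE th (b' th)" if "th \<in> suppP post" for th using b'B that by (simp add: B1_def)
  have pw: "0 \<le> (\<Prod>k\<in>UNIV - {j}. post k (th k)) * (EU (G j) (b' (th(j := mc))) - EU (G j) (b' th))"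
    if thS: "th \<in> {th. th j = t0 j \<and> (\<forall>k. k \<noteq> j \<longrightarrow> th k \<in> supp (post k))}" for th j
  proof (rule mult_nonneg_nonneg)
    show "0 \<le> (\<Prod>k\<in>UNIV - {j}. post k (th k))" by (rule prod_nonneg) (simp add: pnn)
      have thP: "th \<in> suppP post" unfolding suppP_def spost
      proof (intro CollectI allI)
        fix k show "th k \<in> insert mc (supp (mu k))" using thS t0[of k] spost[of k] by (cases "k = j") auto
      qed
      show "0 \<le> EU (G j) (b' (th(j := mc))) - EU (G j) (b' th)"
      proof (cases "\<exists>k. k \<noteq> j \<and> th k = mc")
        case True
        then obtain k where k: "k \<noteq> j" "th k = mc" by blast
        have "EU (G j) (b' (th(j := mc))) = 7" unfolding b'_def
          by (rule bdev_seven[of _ j mc k]) (use k in auto)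
        moreover have "EU (G j) (b' th) \<le> 7"
          using NEb'[OF thP] by (intro EU_le G_le7) (simp add: is_NE_def)
        ultimately show ?thesis by simp
      next
        case False
        have "th \<in> suppP mu" unfolding suppP_def
        proof (intro CollectI allI)
          fix k show "th k \<in> supp (mu k)" using False thS t0[of k] spost[of k] by (cases "k = j") auto
        qed
        hence "b' (th(j := mc)) = b th" "b' th = b th" unfolding b'_def
          using bdev_mimic[of mc mu th j t0 b] bdev_agree[of mc mu th t0 b] nm thS by auto
        thus ?thesis by simp
      qed
  qed
  have diff_ge: "avg_fit G post b' j mc - avg_fit G post b' j (t0 j) \<ge> 0" for j
    unfolding avg_diff by (rule sum_nonneg) (rule pw)
  have diff_gt: "avg_fit G post b' P1 mc - avg_fit G post b' P1 (t0 P1) > 0"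
  proof -
    let ?S = "{th. th P1 = t0 P1 \<and> (\<forall>k. k \<noteq> P1 \<longrightarrow> th k \<in> supp (post k))}"
    let ?f = "\<lambda>th. (\<Prod>k\<in>UNIV - {P1}. post k (th k)) * (EU (G P1) (b' (th(P1 := mc))) - EU (G P1) (b' th))"
    have finS: "finite ?S"
    proof (rule finite_subset)
      show "?S \<subseteq> (\<lambda>(y, z). trip (t0 P1) y z) ` (supp (post P2) \<times> supp (post P3))"
      proof
        fix th assume "th \<in> ?S"
        hence "th = trip (t0 P1) (th P2) (th P3)" "th P2 \<in> supp (post P2)" "th P3 \<in> supp (post P3)"
          using trip_eta[of th] by auto
        thus "th \<in> (\<lambda>(y, z). trip (t0 P1) y z) ` (supp (post P2) \<times> supp (post P3))"
          by (intro image_eqI[where x="(th P2, th P3)"]) auto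
      qed
      show "finite ((\<lambda>(y, z). trip (t0 P1) y z) ` (supp (post P2) \<times> supp (post P3)))"
        using fin spost by simp
    qed
    let ?x = "trip (t0 P1) mc mc"
    have "?x k \<in> supp (post k)" if "k \<noteq> P1" for k using that by (cases k) (auto simp: spost)
    hence xS: "?x \<in> ?S" by simp
    have t0mc: "t0 P1 \<noteq> mc" using t0[of P1] nm[of P1] by auto
    have "0 < ?f ?x"
    proof -
      have w: "(\<Prod>k\<in>UNIV - {P1}. post k (?x k)) = e * e"
      proof -
        have "UNIV - {P1} = {P2, P3}" by (auto simp: UNIV_player)
        thus ?thesis by (simp add: pmc)
      qed
      have "EU (G P1) (b' (?x(P1 := mc))) = 7" unfolding b'_def
        by (simp add: bdev_def EU_pure G_vals)
      moreover have "EU (G P1) (b' ?x) = 0" unfolding b'_def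
        using t0mc by (simp add: bdev_def EU_pure G_vals)
      ultimately show ?thesis using w e by simp
    qed
    moreover have "\<And>th. th \<in> ?S \<Longrightarrow> 0 \<le> ?f th" by (rule pw)
    ultimately have "0 < sum ?f ?S" by (intro sum_pos2[OF finS xS])
    thus ?thesis unfolding avg_diff .
  qed
  have m1: "mc \<in> supp (post P1)" "t0 P1 \<in> supp (post P1)" using spost t0 by auto
  from disj show False
  proof
    assume "\<exists>j\<in>UNIV. \<forall>t\<in>supp (mu j). avg_fit G post b' j t > avg_fit G post b' j mc"
    then obtain j where "avg_fit G post b' j (t0 j) > avg_fit G post b' j mc" using t0 by blast
    thus False using diff_ge[of j] by simp
  next
    assume "balanced G post b'"
    hence "avg_fit G post b' P1 mc = avg_fit G post b' P1 (t0 P1)"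
      using m1 unfolding balanced_def by blast
    thus False using diff_gt by simp
  qed
qed

theorem mainTheorem7:
  shows "\<not> stable_profile G sigma0 \<and> (\<forall>\<sigma>. mixedprof \<sigma> \<longrightarrow> \<not> stable_profile G \<sigma>)"
  using not_stable unfolding stable_profile_def by blast

end
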